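(* Let $P$ be a finite semipure poset of length $n$ with a unique maximum element, $t\ge1$, $\lambda_P:\mathrm{Cov}(\hat P)\to L_P$ an EL-labeling, and $\lambda$ the induced EL-labeling of $\widehat{P*T_{t,n}}$. Then the number of ascent free maximal chains of $\widehat{P*T_{t,n}}$ of length $n+2$ under $\lambda$ equals $$\sum_{\substack{w\in\mathrm{NDA}_{n+1}(L_P)\\ w_1\not\le w_2,\ w_n\not\le w_{n+1}}} c(w)\,t^{\mathrm{asc}(w)+1}(1+t)^{n-1-2\,\mathrm{asc}(w)},$$ where $c(w)$ is the number of maximal chains of $P\uplus\{\hat 0_P\}$ (i.e. of $\hat P$ with $\hat 1_P$ removed) whose label sequence under $\lambda_P$ is $w$.
   Context: Rees product $P*Q$ of semipure posets (rank $r_P(x)$ = common length of maximal chains of $P_{\le x}$): the set $\{(p,q): r_P(p)\ge r_Q(q)\}$ with $(p_1,q_1)\le(p_2,q_2)$ iff $p_1\le p_2$, $q_1\le q_2$, $r_P(p_2)-r_P(p_1)\ge r_Q(q_2)-r_Q(q_1)$. $T_{t,n}$: sequences over $\{1,\dots,t\}$ of length $\le n$ ordered by prefix, minimum $\hat 0_T$, rank = length. $\hat Q$: $Q$ with new minimum and maximum adjoined; for $\hat P$ these are $\hat 0_P,\hat 1_P$. An edge labeling $\lambda:\mathrm{Cov}(Q)\to L$ ($L$ a poset) of a bounded poset is an EL-labeling if each interval $[x,y]$ has a unique maximal chain with weakly increasing labels and its label sequence lexicographically precedes those of all other maximal chains of $[x,y]$. The induced labeling $\lambda$ of $\widehat{P*T_{t,n}}$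 takes values in $L_P\times\{0<1\}$ (product order): the minimum of $\widehat{P*T_{t,n}}$ is identified with $(\hat 0_P,\hat 0_T)$; for a cover $(x,k)\lessdot(y,l)$ with $(y,l)\ne\hat 1$, $\lambda=(\lambda_P(x,y),1)$ if $k<l$ and $(\lambda_P(x,y),0)$ if $k=l$; for a cover $(x,k)\lessdot\hat 1$, $\lambda=(\lambda_P(x,\hat 1_P),0)$. A maximal chain is ascent free if no two consecutive labels $a,b$ satisfy $a\le b$. For a word $w=w_1\cdots w_N$ over a poset $A$, $i\in[N-1]$ is an ascent if $w_i\le w_{i+1}$, $\mathrm{asc}(w)$ is the number of ascents, $i\in[N-2]$ is a double ascent if $w_i\le w_{i+1}\le w_{i+2}$, and $\mathrm{NDA}_N(A)$ is the set of words of length $N$ over $A$ with no double ascents. *)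

theory Defs
  imports Complex_Main "HOL-Library.Product_Order" "HOL-Library.Sublist"
begin

definition cover :: "'b set \<Rightarrow> ('b \<Rightarrow> 'b \<Rightarrow> bool) \<Rightarrow> 'b \<Rightarrow> 'b \<Rightarrow> bool" where
  "cover X le x y \<longleftrightarrow> x \<in> X \<and> y \<in> X \<and> le x y \<and> x \<noteq> y \<and>
     \<not> (\<exists>z\<in>X. le x z \<and> le z y \<and> z \<noteq> x \<and> z \<noteq> y)"

text \<open>Its length is (length of the list) - 1.\<close>
definition maxchain :: "'b set \<Rightarrow> ('b \<Rightarrow> 'b \<Rightarrow> bool) \<Rightarrow> 'b list \<Rightarrow> bool" where
  "maxchain X le c \<longleftrightarrow> c \<noteq> [] \<and> set c \<subseteq> X \<and>
     (\<forall>z\<in>X. le z (hd c) \<longrightarrow> z = hd c) \<and>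
     (\<forall>z\<in>X. le (last c) z \<longrightarrow> z = last c) \<and>
     (\<forall>i. Suc i < length c \<longrightarrow> cover X le (c ! i) (c ! Suc i))"

definition down_set :: "'b set \<Rightarrow> ('b \<Rightarrow> 'b \<Rightarrow> bool) \<Rightarrow> 'b \<Rightarrow> 'b set" where
  "down_set X le x = {y \<in> X. le y x}"

definition interval :: "'b set \<Rightarrow> ('b \<Rightarrow> 'b \<Rightarrow> bool) \<Rightarrow> 'b \<Rightarrow> 'b \<Rightarrow> 'b set" where
  "interval X le x y = {z \<in> X. le x z \<and> le z y}"

definition semipure :: "'b set \<Rightarrow> ('b \<Rightarrow> 'b \<Rightarrow> bool) \<Rightarrow> bool" where
  "semipure X le \<longleftrightarrow> (\<forall>x\<in>X. \<exists>k. \<forall>c. maxchain (down_set X le x) le c \<longrightarrow> length c = Suc k)"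

definition prank :: "'b set \<Rightarrow> ('b \<Rightarrow> 'b \<Rightarrow> bool) \<Rightarrow> 'b \<Rightarrow> nat" where
  "prank X le x = (SOME k. \<forall>c. maxchain (down_set X le x) le c \<longrightarrow> length c = Suc k)"

definition poset_length :: "'b set \<Rightarrow> ('b \<Rightarrow> 'b \<Rightarrow> bool) \<Rightarrow> nat" where
  "poset_length X le = Max {length c - 1 | c. maxchain X le c}"

definition labels :: "('b \<Rightarrow> 'b \<Rightarrow> 'l) \<Rightarrow> 'b list \<Rightarrow> 'l list" where
  "labels lam c = map (\<lambda>i. lam (c ! i) (c ! Suc i)) [0..<length c - 1]"

definition weakly_increasing :: "'l::order list \<Rightarrow> bool" where
  "weakly_increasing w \<longleftrightarrow> (\<forall>i. Suc i < length w \<longrightarrow> w ! i \<le> w ! Suc i)"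

definition lex_less :: "'l::order list \<Rightarrow> 'l list \<Rightarrow> bool" where
  "lex_less u v \<longleftrightarrow> (u, v) \<in> lexord {(a, b). a < b}"

definition EL_labeling :: "'b set \<Rightarrow> ('b \<Rightarrow> 'b \<Rightarrow> bool) \<Rightarrow> ('b \<Rightarrow> 'b \<Rightarrow> 'l::order) \<Rightarrow> bool" where
  "EL_labeling X le lam \<longleftrightarrow>
     (\<forall>x\<in>X. \<forall>y\<in>X. le x y \<longrightarrow>
        (\<exists>!c. maxchain (interval X le x y) le c \<and> weakly_increasing (labels lam c)) \<and>
        (\<forall>c c'. maxchain (interval X le x y) le c \<and> weakly_increasing (labels lam c) \<and>
                maxchain (interval X le x y) le c' \<and> c' \<noteq> c \<longrightarrow>
                lex_less (labels lam c) (labels lam c')))"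

definition ascent_free :: "'l::order list \<Rightarrow> bool" where
  "ascent_free w \<longleftrightarrow> (\<forall>i. Suc i < length w \<longrightarrow> \<not> w ! i \<le> w ! Suc i)"

text \<open>Number of ascents (positions i with w_i <= w_{i+1}; 0-indexed here).\<close>
definition asc :: "'l::order list \<Rightarrow> nat" where
  "asc w = card {i. Suc i < length w \<and> w ! i \<le> w ! Suc i}"

definition no_double_ascent :: "'l::order list \<Rightarrow> bool" where
  "no_double_ascent w \<longleftrightarrow>
     (\<forall>i. Suc (Suc i) < length w \<longrightarrow> \<not> (w ! i \<le> w ! Suc i \<and> w ! Suc i \<le> w ! Suc (Suc i)))"

definition NDA :: "nat \<Rightarrow> 'l::order list set" where
  "NDA N = {w. length w = N \<and> no_double_ascent w}"

datatype 'a hat = Bot | Elm 'a | Top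

fun hat_le :: "('a \<Rightarrow> 'a \<Rightarrow> bool) \<Rightarrow> 'a hat \<Rightarrow> 'a hat \<Rightarrow> bool" where
  "hat_le le Bot _ = True"
| "hat_le le (Elm x) (Elm y) = le x y"
| "hat_le le _ Top = True"
| "hat_le le _ _ = False"

definition hat_carrier :: "'a set \<Rightarrow> 'a hat set" where
  "hat_carrier X = insert Bot (insert Top (Elm ` X))"

text \<open>T_{t,n}: words over {1..t} of length at most n, ordered by prefix, rank = length.\<close>
definition T_carrier :: "nat \<Rightarrow> nat \<Rightarrow> nat list set" where
  "T_carrier t n = {q. set q \<subseteq> {1..t} \<and> length q \<le> n}"

definition rees_carrier :: "'a::order set \<Rightarrow> nat \<Rightarrow> nat \<Rightarrow> ('a \<times> nat list) set" where
  "rees_carrier P t n =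
     {(p, q). p \<in> P \<and> q \<in> T_carrier t n \<and> prank P (\<le>) p \<ge> length q}"

fun rees_le :: "'a::order set \<Rightarrow> ('a \<times> nat list) \<Rightarrow> ('a \<times> nat list) \<Rightarrow> bool" where
  "rees_le P (p1, q1) (p2, q2) \<longleftrightarrow> p1 \<le> p2 \<and> prefix q1 q2 \<and>
     int (prank P (\<le>) p2) - int (prank P (\<le>) p1) \<ge> int (length q2) - int (length q1)"

text \<open>The induced labeling of the hat of P * T, with values in L_P x {0 < 1}
  (here {0 < 1} is rendered as bool, False < True). The minimum Bot of the hat
  is identified with (hat-0 of P, empty word).\<close>
fun hat_fst :: "('a \<times> nat list) hat \<Rightarrow> 'a hat" where
  "hat_fst Bot = Bot"
| "hat_fst (Elm (x, k)) = Elm x"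
| "hat_fst Top = Top"

fun hat_snd :: "('a \<times> nat list) hat \<Rightarrow> nat list" where
  "hat_snd Bot = []"
| "hat_snd (Elm (x, k)) = k"
| "hat_snd Top = []"

fun induced_lab :: "('a hat \<Rightarrow> 'a hat \<Rightarrow> 'l) \<Rightarrow> ('a \<times> nat list) hat \<Rightarrow> ('a \<times> nat list) hat \<Rightarrow> 'l \<times> bool" where
  "induced_lab lamP u (Elm (y, l)) = (lamP (hat_fst u) (Elm y), strict_prefix (hat_snd u) l)"
| "induced_lab lamP u Top = (lamP (hat_fst u) Top, False)"
| "induced_lab lamP u Bot = undefined"

definition chain_count :: "'a::order set \<Rightarrow> ('a hat \<Rightarrow> 'a hat \<Rightarrow> 'l) \<Rightarrow> 'l list \<Rightarrow> nat" where
  "chain_count P lamP w =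
     card {c. maxchain (insert Bot (Elm ` P)) (hat_le (\<le>)) c \<and> labels lamP c = w}"

end

theory Submission
  imports Defs
begin


locale RS =
  fixes P :: "'a::order set" and n :: nat and m :: 'a
  assumes fin: "finite P" and sp: "semipure P (\<le>)" and plen: "poset_length P (\<le>) = n"
    and mP: "m \<in> P" and mmax: "\<forall>x\<in>P. x \<le> m"
begin

abbreviation "r \<equiv> prank P (\<le>)"
abbreviation "D \<equiv> down_set P (\<le>)"

lemma rank_char:
  assumes "x \<in> P" "maxchain (D x) (\<le>) c" shows "length c = Suc (r x)"
proof -
  obtain k where k: "\<forall>c. maxchain (D x) (\<le>) c \<longrightarrow> length c = Suc k"
    using sp assms(1) unfolding semipure_def by blast
  hence "\<forall>c. maxchain (D x) (\<le>) c \<longrightarrow> length c = Suc (r x)"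
    unfolding prank_def by (rule someI)
  thus ?thesis using assms(2) by blast
qed

lemma maxchain_snoc:
  assumes "maxchain (D y) (\<le>) c" "last c = y" "cover P (\<le>) y x"
  shows "maxchain (D x) (\<le>) (c @ [x])"
proof -
  have yx: "y \<le> x" "y \<in> P" "x \<in> P" using assms(3) unfolding cover_def by auto
  have cne: "c \<noteq> []" and cs: "set c \<subseteq> D y" using assms(1) unfolding maxchain_def by auto
  have hdmin: "\<forall>z\<in>D y. z \<le> hd c \<longrightarrow> z = hd c" using assms(1) unfolding maxchain_def by auto
  have cov: "\<forall>i. Suc i < length c \<longrightarrow> cover (D y) (\<le>) (c ! i) (c ! Suc i)"
    using assms(1) unfolding maxchain_def by auto
  have Dsub: "D y \<subseteq> D x" using yx unfolding down_set_def by (auto intro: order_trans)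
  have hdy: "hd c \<in> D y" using cne cs by auto
  show ?thesis unfolding maxchain_def
  proof (intro conjI ballI allI impI)
    show "c @ [x] \<noteq> []" by simp
    show "set (c @ [x]) \<subseteq> D x" using cs Dsub yx unfolding down_set_def by auto
  next
    fix z assume "z \<in> D x" "z \<le> hd (c @ [x])"
    hence "z \<le> hd c" "z \<in> P" using cne unfolding down_set_def by auto
    moreover have "hd c \<le> y" using hdy unfolding down_set_def by auto
    ultimately have "z \<in> D y" unfolding down_set_def by (auto intro: order_trans)
    thus "z = hd (c @ [x])" using hdmin \<open>z \<le> hd c\<close> cne by auto
  next
    fix z assume "z \<in> D x" "last (c @ [x]) \<le> z"
    thus "z = last (c @ [x])" unfolding down_set_def by auto
  next
    fix i assume i: "Suc i < length (c @ [x])"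
    show "cover (D x) (\<le>) ((c @ [x]) ! i) ((c @ [x]) ! Suc i)"
    proof (cases "Suc i < length c")
      case True
      hence cv: "cover (D y) (\<le>) (c ! i) (c ! Suc i)" using cov by blast
      have e: "(c @ [x]) ! i = c ! i" "(c @ [x]) ! Suc i = c ! Suc i" using True by (auto simp: nth_append)
      show ?thesis unfolding e using cv Dsub unfolding cover_def down_set_def
        by (auto intro: order_trans)
    next
      case False
      hence li: "Suc i = length c" using i by simp
      have ii: "i = length c - 1" using li by simp
      have e: "(c @ [x]) ! i = y" "(c @ [x]) ! Suc i = x" using li assms(2) cne unfolding ii
        by (auto simp: nth_append last_conv_nth)
      show ?thesis unfolding e using assms(3) unfolding cover_def down_set_def by auto
    qed
  qed
qed

lemma exists_maxchain:
  assumes "x \<in> P" shows "\<exists>c. maxchain (D x) (\<le>) c \<and> last c = x"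
  using assms
proof (induction "card {z\<in>P. z < x}" arbitrary: x rule: less_induct)
  case less
  show ?case
  proof (cases "{z\<in>P. z < x} = {}")
    case True
    have "maxchain (D x) (\<le>) [x]" using True less.prems unfolding maxchain_def down_set_def
      by (auto simp: order.order_iff_strict)
    thus ?thesis by auto
  next
    case False
    obtain y where y: "y \<in> {z\<in>P. z < x}" "\<forall>b\<in>{z\<in>P. z < x}. y \<le> b \<longrightarrow> y = b"
      using finite_has_maximal[OF _ False] fin by auto
    have cv: "cover P (\<le>) y x" using y less.prems unfolding cover_def
      by (auto simp: order.order_iff_strict)
    have "{z\<in>P. z < y} \<subset> {z\<in>P. z < x}" using y by auto
    hence "card {z\<in>P. z < y} < card {z\<in>P. z < x}" using fin by (intro psubset_card_mono) auto
    then obtain c where "maxchain (D y) (\<le>) c" "last c = y" using less.hyps y by blast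
    thus ?thesis using maxchain_snoc[OF _ _ cv] by force
  qed
qed

lemma r_cover: assumes "cover P (\<le>) y x" shows "r x = Suc (r y)"
proof -
  have "y \<in> P" "x \<in> P" using assms unfolding cover_def by auto
  obtain c where c: "maxchain (D y) (\<le>) c" "last c = y" using exists_maxchain \<open>y \<in> P\<close> by blast
  have "length (c @ [x]) = Suc (r x)" using rank_char[OF \<open>x \<in> P\<close> maxchain_snoc[OF c assms]] .
  moreover have "length c = Suc (r y)" using rank_char[OF \<open>y \<in> P\<close> c(1)] .
  ultimately show ?thesis by simp
qed

lemma r_min: assumes "x \<in> P" "\<forall>z\<in>P. z \<le> x \<longrightarrow> z = x" shows "r x = 0"
proof -
  have "maxchain (D x) (\<le>) [x]" using assms unfolding maxchain_def down_set_def cover_def by auto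
  from rank_char[OF assms(1) this] show ?thesis by simp
qed

lemma r_strict: assumes "x \<in> P" "y \<in> P" "x < y" shows "r x < r y"
  using assms
proof (induction "card {z\<in>P. z < y}" arbitrary: y rule: less_induct)
  case less
  have ne: "{z\<in>P. x \<le> z \<and> z < y} \<noteq> {}" using less.prems by auto
  obtain z where z: "z \<in> {z\<in>P. x \<le> z \<and> z < y}" "\<forall>b\<in>{z\<in>P. x \<le> z \<and> z < y}. z \<le> b \<longrightarrow> z = b"
    using finite_has_maximal[OF _ ne] fin by auto
  have cv: "cover P (\<le>) z y" using z less.prems unfolding cover_def
    by (auto simp: order.order_iff_strict intro: order.trans)
  have ry: "r y = Suc (r z)" using r_cover[OF cv] .
  show ?case
  proof (cases "z = x")
    case True thus ?thesis using ry by simp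
  next
    case False
    hence "x < z" using z by auto
    have "{w\<in>P. w < z} \<subset> {w\<in>P. w < y}" using z by auto
    hence "card {w\<in>P. w < z} < card {w\<in>P. w < y}" using fin by (intro psubset_card_mono) auto
    hence "r x < r z" using less.hyps[of z] z \<open>x < z\<close> less.prems by auto
    thus ?thesis using ry by simp
  qed
qed

lemma r_m: "r m = n"
proof -
  have Dm: "D m = P" using mmax unfolding down_set_def by auto
  obtain c where c: "maxchain P (\<le>) c" using exists_maxchain[OF mP] Dm by auto
  have "{length c - 1 | c. maxchain P (\<le>) c} = {r m}"
    using rank_char[OF mP] Dm c by force
  thus ?thesis using plen unfolding poset_length_def by simp
qed

lemma r_le: assumes "x \<in> P" shows "r x \<le> n"
proof (cases "x = m")
  case True thus ?thesis using r_m by simp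
next
  case False
  hence "x < m" using mmax assms by (auto simp: order.order_iff_strict)
  thus ?thesis using r_strict[OF assms mP] r_m by simp
qed

lemma cover_of_rank: assumes "x \<in> P" "y \<in> P" "x < y" "r y = Suc (r x)" shows "cover P (\<le>) x y"
  unfolding cover_def
proof (intro conjI)
  show "\<not> (\<exists>z\<in>P. x \<le> z \<and> z \<le> y \<and> z \<noteq> x \<and> z \<noteq> y)"
  proof
    assume "\<exists>z\<in>P. x \<le> z \<and> z \<le> y \<and> z \<noteq> x \<and> z \<noteq> y"
    then obtain z where "z \<in> P" "x < z" "z < y" by (auto simp: order.order_iff_strict)
    with r_strict[of x z] r_strict[of z y] assms show False by auto
  qed
qed (use assms in auto)

end


lemma card_lists_prod:
  assumes "\<forall>k<n. finite (A k)"
  shows "card {s. length s = n \<and> (\<forall>k<n. s ! k \<in> A k)} = (\<Prod>k<n. card (A k))"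
  using assms
proof (induction n)
  case 0
  have "{s. length s = 0 \<and> (\<forall>k<0. s ! k \<in> A k)} = {[]}" by auto
  thus ?case by simp
next
  case (Suc n)
  let ?S = "\<lambda>n. {s. length s = n \<and> (\<forall>k<n. s ! k \<in> A k)}"
  have eq: "?S (Suc n) = (\<lambda>(s, a). s @ [a]) ` (?S n \<times> A n)"
  proof (intro set_eqI iffI)
    fix s assume s: "s \<in> ?S (Suc n)"
    have "s \<noteq> []" using s by auto
    then obtain u a where u: "s = u @ [a]" by (metis append_butlast_last_id)
    have "u \<in> ?S n" "a \<in> A n" using s unfolding u
      by (auto simp: nth_append) (metis less_SucI nth_append)
    thus "s \<in> (\<lambda>(s, a). s @ [a]) ` (?S n \<times> A n)" using u by auto
  next
    fix s assume "s \<in> (\<lambda>(s, a). s @ [a]) ` (?S n \<times> A n)"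
    then obtain u a where "s = u @ [a]" "u \<in> ?S n" "a \<in> A n" by auto
    thus "s \<in> ?S (Suc n)" by (auto simp: nth_append less_Suc_eq)
  qed
  have inj: "inj_on (\<lambda>(s, a). s @ [a]) (?S n \<times> A n)" by (auto simp: inj_on_def)
  have "card (?S (Suc n)) = card (?S n \<times> A n)" unfolding eq by (rule card_image[OF inj])
  also have "\<dots> = card (?S n) * card (A n)" by (rule card_cartesian_product)
  also have "\<dots> = (\<Prod>k<Suc n. card (A k))" using Suc by simp
  finally show ?case .
qed

definition Opt :: "nat \<Rightarrow> nat option set" where "Opt t = insert None (Some ` {1..t})"

definition must_some :: "nat \<Rightarrow> 'l::order list \<Rightarrow> nat \<Rightarrow> bool" where
  "must_some n w k \<longleftrightarrow> Suc k = n \<or> (k + 2 \<le> n \<and> w ! (k+1) \<le> w ! (k+2))"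
definition must_none :: "'l::order list \<Rightarrow> nat \<Rightarrow> bool" where
  "must_none w k \<longleftrightarrow> 1 \<le> k \<and> w ! k \<le> w ! (k+1)"
definition Aset :: "nat \<Rightarrow> nat \<Rightarrow> 'l::order list \<Rightarrow> nat \<Rightarrow> nat option set" where
  "Aset t n w k = {z \<in> Opt t. (must_some n w k \<longrightarrow> z \<noteq> None) \<and> (must_none w k \<longrightarrow> z = None)}"
definition V :: "nat \<Rightarrow> nat \<Rightarrow> 'l::order list \<Rightarrow> nat option list set" where
  "V t n w = {s. length s = n \<and> (\<forall>k<n. s ! k \<in> Aset t n w k)}"

lemma card_Opt: "card (Opt t) = Suc t"
  unfolding Opt_def by (subst card_insert_disjoint) (auto simp: card_image)

lemma finite_Opt: "finite (Opt t)" unfolding Opt_def by auto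

lemma card_Aset:
  "card (Aset t n w k) = (if must_some n w k \<and> must_none w k then 0 else if must_some n w k then t
     else if must_none w k then 1 else Suc t)"
proof -
  have "must_some n w k \<and> must_none w k \<Longrightarrow> Aset t n w k = {}" unfolding Aset_def by auto
  moreover have "must_some n w k \<and> \<not> must_none w k \<Longrightarrow> Aset t n w k = Some ` {1..t}"
    unfolding Aset_def Opt_def by auto
  moreover have "\<not> must_some n w k \<and> must_none w k \<Longrightarrow> Aset t n w k = {None}"
    unfolding Aset_def Opt_def by auto
  moreover have "\<not> must_some n w k \<and> \<not> must_none w k \<Longrightarrow> Aset t n w k = Opt t"
    unfolding Aset_def by auto
  ultimately show ?thesis using card_Opt by (auto simp: card_image)
qed

lemma conflict_iff:
  fixes w :: "'l::order list"
  assumes len: "length w = Suc n" and n1: "n \<ge> 1" and w01: "\<not> w ! 0 \<le> w ! 1"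
  shows "(\<exists>k<n. must_some n w k \<and> must_none w k) \<longleftrightarrow> \<not> no_double_ascent w \<or> w ! (n-1) \<le> w ! n"
proof
  assume "\<exists>k<n. must_some n w k \<and> must_none w k"
  then obtain k where k: "k < n" "must_some n w k" "must_none w k" by blast
  show "\<not> no_double_ascent w \<or> w ! (n-1) \<le> w ! n"
  proof (cases "Suc k = n")
    case True thus ?thesis using k unfolding must_none_def by (metis diff_Suc_1 Suc_eq_plus1)
  next
    case False
    hence "k + 2 \<le> n" "w ! (k+1) \<le> w ! (k+2)" using k unfolding must_some_def by auto
    thus ?thesis using k len unfolding must_none_def no_double_ascent_def
      by (metis Suc_eq_plus1 add_2_eq_Suc' le_imp_less_Suc)
  qed
next
  assume "\<not> no_double_ascent w \<or> w ! (n-1) \<le> w ! n"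
  thus "\<exists>k<n. must_some n w k \<and> must_none w k"
  proof
    assume "\<not> no_double_ascent w"
    then obtain i where i: "Suc (Suc i) < length w" "w ! i \<le> w ! Suc i" "w ! Suc i \<le> w ! Suc (Suc i)"
      unfolding no_double_ascent_def by blast
    have "i \<noteq> 0" using w01 i by (cases i) auto
    thus ?thesis using i len unfolding must_some_def must_none_def
      by (intro exI[of _ i]) (auto simp: numeral_2_eq_2)
  next
    assume a: "w ! (n-1) \<le> w ! n"
    have "n \<noteq> 1" using a w01 by auto
    hence "1 \<le> n - 1" using n1 by simp
    thus ?thesis using a n1 unfolding must_some_def must_none_def
      by (intro exI[of _ "n-1"]) auto
  qed
qed

lemma card_V:
  fixes w :: "'l::order list"
  assumes len: "length w = Suc n" and n1: "n \<ge> 1" and w01: "\<not> w ! 0 \<le> w ! 1"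
  shows "card (V t n w) = (if no_double_ascent w \<and> \<not> w ! (n-1) \<le> w ! n
      then t ^ (asc w + 1) * (Suc t) ^ (n - 1 - 2 * asc w) else 0)"
proof -
  have cV: "card (V t n w) = (\<Prod>k<n. card (Aset t n w k))"
    unfolding V_def by (rule card_lists_prod) (auto simp: Aset_def finite_Opt)
  show ?thesis
  proof (cases "no_double_ascent w \<and> \<not> w ! (n-1) \<le> w ! n")
    case False
    then obtain k where k: "k<n" "must_some n w k" "must_none w k"
      using conflict_iff[OF assms] by blast
    have "card (Aset t n w k) = 0" unfolding card_Aset using k by simp
    hence "(\<Prod>k<n. card (Aset t n w k)) = 0" using k(1) by (intro prod_zero) auto
    hence z: "card (V t n w) = 0" by (simp only: cV)
    show ?thesis using False z by (simp only: if_False)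
  next
    case True
    hence nc: "\<forall>k<n. \<not> (must_some n w k \<and> must_none w k)" using conflict_iff[OF assms] by blast
    define MS where "MS = {k\<in>{..<n}. must_some n w k}"
    define MN where "MN = {k\<in>{..<n}. must_none w k}"
    define R where "R = {k\<in>{..<n}. \<not> must_some n w k \<and> \<not> must_none w k}"
    define AS where "AS = {i. Suc i < length w \<and> w ! i \<le> w ! Suc i}"
    have ascAS: "asc w = card AS" unfolding asc_def AS_def ..
    have MNAS: "MN = AS"
    proof (intro set_eqI iffI)
      fix i assume "i \<in> AS"
      hence i: "i < n" "w ! i \<le> w ! Suc i" using len unfolding AS_def by auto
      have "i \<noteq> 0" using i w01 by (cases i) auto
      thus "i \<in> MN" using i unfolding MN_def must_none_def by auto
    next
      fix i assume "i \<in> MN"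
      thus "i \<in> AS" using len unfolding MN_def must_none_def AS_def by auto
    qed
    define B where "B = {k. k + 2 \<le> n \<and> w ! (k+1) \<le> w ! (k+2)}"
    have ASB: "AS = Suc ` B"
    proof (intro set_eqI iffI)
      fix i assume "i \<in> AS"
      hence i: "Suc i < Suc n" "w ! i \<le> w ! Suc i" using len unfolding AS_def by auto
      have "i \<noteq> 0" using i w01 by (cases i) auto
      then obtain k where "i = Suc k" by (cases i) auto
      thus "i \<in> Suc ` B" using i unfolding B_def by auto
    next
      fix i assume "i \<in> Suc ` B"
      thus "i \<in> AS" unfolding B_def AS_def using len by auto
    qed
    have MSB: "MS = insert (n-1) B" unfolding MS_def B_def must_some_def using n1 by auto
    have finB: "finite B" unfolding B_def by (rule finite_subset[of _ "{..n}"]) auto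
    have "n - 1 \<notin> B" unfolding B_def using n1 by auto
    hence cMS: "card MS = Suc (asc w)" unfolding MSB ascAS ASB
      using finB by (simp add: card_image)
    have cMN: "card MN = asc w" using MNAS ascAS by simp
    have disj: "MS \<inter> MN = {}" using nc unfolding MS_def MN_def by auto
    have Req: "R = {..<n} - (MS \<union> MN)" unfolding R_def MS_def MN_def by auto
    have "card (MS \<union> MN) = card MS + card MN"
      by (rule card_Un_disjoint[OF _ _ disj]) (auto simp: MS_def MN_def)
    hence cU: "card (MS \<union> MN) = Suc (2 * asc w)" using cMS cMN by simp
    have "card R = n - card (MS \<union> MN)" unfolding Req
      by (subst card_Diff_subset) (auto simp: MS_def MN_def)
    hence cR: "card R = n - 1 - 2 * asc w" using cU by simp
    have Reqq: "{..<n} \<inter> - {k. must_some n w k} \<inter> - {k. must_none w k} = R" unfolding R_def by auto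
    have MSeq: "{..<n} \<inter> {k. must_some n w k} = MS" unfolding MS_def by auto
    have "(\<Prod>k<n. card (Aset t n w k)) = (\<Prod>k<n. if must_some n w k then t else if must_none w k then 1 else Suc t)"
      using nc by (intro prod.cong) (auto simp only: card_Aset if_False)
    also have "\<dots> = (\<Prod>k\<in>MS. t) * (\<Prod>k\<in>{..<n} \<inter> - {k. must_some n w k}. if must_none w k then 1 else Suc t)"
      using MSeq by (subst prod.If_cases) simp_all
    also have "(\<Prod>k\<in>{..<n} \<inter> - {k. must_some n w k}. if must_none w k then 1 else Suc t)
       = (\<Prod>k\<in>R. Suc t)"
      using Reqq by (subst prod.If_cases) simp_all
    finally have "(\<Prod>k<n. card (Aset t n w k)) = t ^ card MS * Suc t ^ card R" by simp
    thus ?thesis using True cV cMS cR by simp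
  qed
qed


lemma asc_bound:
  fixes w :: "'l::order list"
  assumes len: "length w = Suc n" and n1: "n \<ge> 1" and w01: "\<not> w ! 0 \<le> w ! 1"
    and c: "no_double_ascent w \<and> \<not> w ! (n-1) \<le> w ! n"
  shows "Suc (2 * asc w) \<le> n"
proof -
  have nc: "\<forall>k<n. \<not> (must_some n w k \<and> must_none w k)" using conflict_iff[OF len n1 w01] c by blast
  define MS where "MS = {k\<in>{..<n}. must_some n w k}"
  define MN where "MN = {k\<in>{..<n}. must_none w k}"
  define AS where "AS = {i. Suc i < length w \<and> w ! i \<le> w ! Suc i}"
  have ascAS: "asc w = card AS" unfolding asc_def AS_def ..
  have MNAS: "MN = AS"
  proof (intro set_eqI iffI)
    fix i assume "i \<in> AS"
    hence i: "i < n" "w ! i \<le> w ! Suc i" using len unfolding AS_def by auto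
    have "i \<noteq> 0" using i w01 by (cases i) auto
    thus "i \<in> MN" using i unfolding MN_def must_none_def by auto
  next
    fix i assume "i \<in> MN"
    thus "i \<in> AS" using len unfolding MN_def must_none_def AS_def by auto
  qed
  define B where "B = {k. k + 2 \<le> n \<and> w ! (k+1) \<le> w ! (k+2)}"
  have ASB: "AS = Suc ` B"
  proof (intro set_eqI iffI)
    fix i assume "i \<in> AS"
    hence i: "Suc i < Suc n" "w ! i \<le> w ! Suc i" using len unfolding AS_def by auto
    have "i \<noteq> 0" using i w01 by (cases i) auto
    then obtain k where "i = Suc k" by (cases i) auto
    thus "i \<in> Suc ` B" using i unfolding B_def by auto
  next
    fix i assume "i \<in> Suc ` B"
    thus "i \<in> AS" unfolding B_def AS_def using len by auto
  qed
  have MSB: "MS = insert (n-1) B" unfolding MS_def B_def must_some_def using n1 by auto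
  have finB: "finite B" unfolding B_def by (rule finite_subset[of _ "{..n}"]) auto
  have "n - 1 \<notin> B" unfolding B_def using n1 by auto
  hence cMS: "card MS = Suc (asc w)" unfolding MSB ascAS ASB
    using finB by (simp add: card_image)
  have cMN: "card MN = asc w" using MNAS ascAS by simp
  have disj: "MS \<inter> MN = {}" using nc unfolding MS_def MN_def by auto
  have "card (MS \<union> MN) = card MS + card MN"
    by (rule card_Un_disjoint[OF _ _ disj]) (auto simp: MS_def MN_def)
  hence cU: "card (MS \<union> MN) = Suc (2 * asc w)" using cMS cMN by simp
  have "card (MS \<union> MN) \<le> card {..<n}" by (rule card_mono) (auto simp: MS_def MN_def)
  thus ?thesis using cU by simp
qed



lemma prefix_len_eq: "prefix a b \<Longrightarrow> length b \<le> length a \<Longrightarrow> a = b"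
  unfolding prefix_def by auto

lemma prefix_len1: "prefix a b \<Longrightarrow> length b \<le> Suc (length a) \<Longrightarrow> b = a \<or> (\<exists>x. b = a @ [x])"
proof -
  assume "prefix a b" "length b \<le> Suc (length a)"
  then obtain zs where zs: "b = a @ zs" "length zs \<le> 1" unfolding prefix_def by auto
  thus ?thesis by (cases zs) auto
qed

lemma strict_incr_id:
  fixes f :: "nat \<Rightarrow> nat"
  assumes inc: "\<forall>i<n. f i < f (Suc i)" and bd: "\<forall>i\<le>n. f i \<le> n"
  shows "\<forall>i\<le>n. f i = i"
proof -
  have lo: "i \<le> f i" if "i \<le> n" for i using that
  proof (induction i)
    case (Suc i)
    have "i < n" using Suc.prems by simp
    hence "f i < f (Suc i)" using inc by blast
    thus ?case using Suc by simp
  qed simp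
  have hi: "f (n - j) \<le> n - j" if "j \<le> n" for j using that
  proof (induction j)
    case 0 thus ?case using bd by simp
  next
    case (Suc j)
    have "n - Suc j < n" using Suc.prems by simp
    hence "f (n - Suc j) < f (Suc (n - Suc j))" using inc by blast
    moreover have "Suc (n - Suc j) = n - j" using Suc.prems by simp
    ultimately show ?case using Suc by simp
  qed
  show ?thesis
  proof (intro allI impI)
    fix i assume "i \<le> n"
    thus "f i = i" using lo[of i] hi[of "n - i"] by simp
  qed
qed

definition good :: "'a::order set \<Rightarrow> nat \<Rightarrow> 'a list \<Rightarrow> bool" where
  "good P n xs \<longleftrightarrow> length xs = Suc n \<and> set xs \<subseteq> P \<and> (\<forall>z\<in>P. z \<le> xs ! 0 \<longrightarrow> z = xs ! 0)
     \<and> (\<forall>i<n. cover P (\<le>) (xs ! i) (xs ! Suc i))"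

abbreviation Qc :: "'a set \<Rightarrow> 'a hat set" where "Qc P \<equiv> insert Bot (Elm ` P)"

context RS
begin

lemma good_rank: assumes "good P n xs" shows "\<forall>i\<le>n. r (xs ! i) = i"
proof -
  have xs: "\<forall>i\<le>n. xs ! i \<in> P" using assms unfolding good_def by (auto simp: subset_iff)
  have r0: "r (xs ! 0) = 0" using r_min xs assms unfolding good_def by auto
  show ?thesis
  proof (intro allI impI)
    fix i assume "i \<le> n" thus "r (xs ! i) = i"
    proof (induction i)
      case 0 thus ?case using r0 by simp
    next
      case (Suc i)
      hence "cover P (\<le>) (xs ! i) (xs ! Suc i)" using assms unfolding good_def by auto
      thus ?case using r_cover Suc by simp
    qed
  qed
qed

lemma good_last: assumes "good P n xs" shows "xs ! n = m"
proof (rule ccontr)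
  assume ne: "xs ! n \<noteq> m"
  have "xs ! n \<in> P" using assms unfolding good_def by auto
  hence "xs ! n < m" using ne mmax by (auto simp: order.order_iff_strict)
  hence "r (xs ! n) < r m" using r_strict \<open>xs ! n \<in> P\<close> mP by blast
  thus False using good_rank[OF assms] r_m by simp
qed

lemma cover_Q_Elm: "cover (Qc P) (hat_le (\<le>)) (Elm a) (Elm b) \<Longrightarrow> cover P (\<le>) a b"
  unfolding cover_def by force

lemma cover_Elm_Q: "cover P (\<le>) a b \<Longrightarrow> cover (Qc P) (hat_le (\<le>)) (Elm a) (Elm b)"
  unfolding cover_def by auto

lemma XS_good: "maxchain (Qc P) (hat_le (\<le>)) (Bot # map Elm xs) \<longleftrightarrow> good P n xs"
proof
  assume mc: "maxchain (Qc P) (hat_le (\<le>)) (Bot # map Elm xs)"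
  let ?pc = "Bot # map Elm xs"
  have cov: "\<And>i. Suc i < length ?pc \<Longrightarrow> cover (Qc P) (hat_le (\<le>)) (?pc ! i) (?pc ! Suc i)"
    using mc unfolding maxchain_def by blast
  have setP: "set xs \<subseteq> P" using mc unfolding maxchain_def by auto
  have xsne: "xs \<noteq> []"
  proof
    assume "xs = []"
    hence "Elm m = Bot" using mc mP unfolding maxchain_def by auto
    thus False by simp
  qed
  have lastm: "last xs = m"
  proof -
    have "last ?pc = Elm (last xs)" using xsne by (simp add: last_map)
    hence "\<forall>z\<in>Qc P. hat_le (\<le>) (Elm (last xs)) z \<longrightarrow> z = Elm (last xs)"
      using mc unfolding maxchain_def by metis
    moreover have "last xs \<le> m" using mmax setP xsne last_in_set by blast
    ultimately show ?thesis using mP by auto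
  qed
  have min0: "\<forall>z\<in>P. z \<le> xs ! 0 \<longrightarrow> z = xs ! 0"
  proof -
    have "cover (Qc P) (hat_le (\<le>)) Bot (Elm (xs ! 0))" using cov[of 0] xsne by auto
    thus ?thesis unfolding cover_def by force
  qed
  have covP: "\<And>i. Suc i < length xs \<Longrightarrow> cover P (\<le>) (xs ! i) (xs ! Suc i)"
  proof -
    fix i assume "Suc i < length xs"
    hence "cover (Qc P) (hat_le (\<le>)) (?pc ! Suc i) (?pc ! Suc (Suc i))" using cov[of "Suc i"] by simp
    thus "cover P (\<le>) (xs ! i) (xs ! Suc i)" using \<open>Suc i < length xs\<close> cover_Q_Elm by simp
  qed
  have rk: "\<forall>i<length xs. r (xs ! i) = i"
  proof (intro allI impI)
    fix i assume "i < length xs" thus "r (xs ! i) = i"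
    proof (induction i)
      case 0
      have "xs ! 0 \<in> P" using setP xsne by auto
      thus ?case using r_min min0 by simp
    next
      case (Suc i)
      hence "r (xs ! i) = i" by simp
      thus ?case using r_cover[OF covP[of i]] Suc.prems by simp
    qed
  qed
  have "r (last xs) = length xs - 1" using rk xsne by (simp add: last_conv_nth)
  hence len: "length xs = Suc n" using lastm r_m xsne by (cases xs) auto
  show "good P n xs" unfolding good_def using len setP min0 covP by auto
next
  assume g: "good P n xs"
  have len: "length xs = Suc n" and setP: "set xs \<subseteq> P" and min0: "\<forall>z\<in>P. z \<le> xs ! 0 \<longrightarrow> z = xs ! 0"
    and covP: "\<forall>i<n. cover P (\<le>) (xs ! i) (xs ! Suc i)" using g unfolding good_def by auto
  have "xs \<noteq> []" using len by auto
  hence lastm: "last xs = m" using good_last[OF g] len by (simp add: last_conv_nth)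
  show "maxchain (Qc P) (hat_le (\<le>)) (Bot # map Elm xs)" unfolding maxchain_def
  proof (intro conjI ballI allI impI)
    show "set (Bot # map Elm xs) \<subseteq> Qc P" using setP by auto
  next
    fix z assume "z \<in> Qc P" "hat_le (\<le>) z (hd (Bot # map Elm xs))"
    thus "z = hd (Bot # map Elm xs)" by (cases z) auto
  next
    fix z assume "z \<in> Qc P" "hat_le (\<le>) (last (Bot # map Elm xs)) z"
    moreover have "last (Bot # map Elm xs) = Elm m" using lastm len by (cases xs) (auto simp: last_map)
    ultimately show "z = last (Bot # map Elm xs)" using mmax
      by (cases z) (auto intro: order.antisym)
  next
    fix i assume i: "Suc i < length (Bot # map Elm xs)"
    show "cover (Qc P) (hat_le (\<le>)) ((Bot # map Elm xs) ! i) ((Bot # map Elm xs) ! Suc i)"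
    proof (cases i)
      case 0
      have "xs ! 0 \<in> P" using setP len by auto
      thus ?thesis using 0 len min0 unfolding cover_def
        by auto
    next
      case (Suc j)
      thus ?thesis using i covP len cover_Elm_Q by auto
    qed
  qed simp
qed

end


definition opt :: "nat option \<Rightarrow> nat list" where
  "opt z = (case z of None \<Rightarrow> [] | Some a \<Rightarrow> [a])"
definition qs :: "nat option list \<Rightarrow> nat \<Rightarrow> nat list" where
  "qs s i = concat (map opt (take i s))"
definition Fc :: "'a list \<Rightarrow> nat option list \<Rightarrow> ('a \<times> nat list) hat list" where
  "Fc xs s = Bot # map (\<lambda>i. Elm (xs ! i, qs s i)) [0..<length xs] @ [Top]"
definition SL :: "nat \<Rightarrow> nat \<Rightarrow> nat option list set" where
  "SL t n = {s. length s = n \<and> (\<forall>k<n. s ! k \<in> Opt t)}"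

lemma qs_0[simp]: "qs s 0 = []" unfolding qs_def by simp
lemma qs_Suc: "i < length s \<Longrightarrow> qs s (Suc i) = qs s i @ opt (s ! i)"
  unfolding qs_def by (simp add: take_Suc_conv_app_nth)

lemma len_concat_opt: "length (concat (map opt l)) \<le> length l"
  by (induction l) (auto simp: opt_def split: option.splits)

lemma len_qs: "length (qs s i) \<le> i"
  unfolding qs_def using len_concat_opt[of "take i s"] by simp

lemma set_qs: assumes "\<forall>k<length s. s ! k \<in> Opt t" shows "set (qs s i) \<subseteq> {1..t}"
proof -
  have "\<forall>z\<in>set (take i s). z \<in> Opt t" using assms
    by (auto simp: in_set_conv_nth)
  thus ?thesis unfolding qs_def Opt_def opt_def by (auto split: option.splits)
qed

lemma Fc_len: "length (Fc xs s) = length xs + 2" unfolding Fc_def by simp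
lemma Fc_0: "Fc xs s ! 0 = Bot" unfolding Fc_def by simp
lemma Fc_Suc: "i < length xs \<Longrightarrow> Fc xs s ! Suc i = Elm (xs ! i, qs s i)"
  unfolding Fc_def by (simp add: nth_append)
lemma Fc_last: "Fc xs s ! Suc (length xs) = Top"
  unfolding Fc_def by (simp add: nth_append)

context RS
begin

abbreviation "H t \<equiv> hat_carrier (rees_carrier P t n)"
abbreviation "hle \<equiv> hat_le (rees_le P)"

lemma H_mid1: "z \<in> H t \<Longrightarrow> hle z (Elm b) \<Longrightarrow> z \<noteq> Bot \<Longrightarrow> \<exists>y l. z = Elm (y, l) \<and> (y, l) \<in> rees_carrier P t n"
  unfolding hat_carrier_def by (cases z) auto
lemma H_mid2: "z \<in> H t \<Longrightarrow> hle (Elm a) z \<Longrightarrow> z \<noteq> Top \<Longrightarrow> \<exists>y l. z = Elm (y, l) \<and> (y, l) \<in> rees_carrier P t n"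
  unfolding hat_carrier_def by (cases z) auto

lemma maxchain_Fc:
  assumes g: "good P n xs" and s: "s \<in> SL t n"
  shows "maxchain (H t) hle (Fc xs s)"
proof -
  have len: "length xs = Suc n" and setP: "set xs \<subseteq> P" and min0: "\<forall>z\<in>P. z \<le> xs ! 0 \<longrightarrow> z = xs ! 0"
    and covP: "\<forall>i<n. cover P (\<le>) (xs ! i) (xs ! Suc i)" using g unfolding good_def by auto
  have rk: "\<forall>i\<le>n. r (xs ! i) = i" using good_rank[OF g] .
  have xn: "xs ! n = m" using good_last[OF g] .
  have sl: "length s = n" "\<forall>k<n. s ! k \<in> Opt t" using s unfolding SL_def by auto
  have xP: "\<And>i. i \<le> n \<Longrightarrow> xs ! i \<in> P" using setP len by (auto simp: subset_iff)
  have inRC: "\<And>i. i \<le> n \<Longrightarrow> (xs ! i, qs s i) \<in> rees_carrier P t n"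
  proof -
    fix i assume i: "i \<le> n"
    have "length (qs s i) \<le> i" by (rule len_qs)
    moreover have "set (qs s i) \<subseteq> {1..t}" using set_qs sl by auto
    ultimately show "(xs ! i, qs s i) \<in> rees_carrier P t n"
      unfolding rees_carrier_def T_carrier_def using xP[OF i] rk i by auto
  qed
  have elH: "\<And>i. i < length (Fc xs s) \<Longrightarrow> Fc xs s ! i \<in> H t"
  proof -
    fix i assume "i < length (Fc xs s)"
    hence "i = 0 \<or> (\<exists>j\<le>n. i = Suc j) \<or> i = Suc (Suc n)" using len Fc_len[of xs s]
      by (cases i) auto
    thus "Fc xs s ! i \<in> H t" using inRC len Fc_0 Fc_last[of xs s] Fc_Suc[of _ xs s]
      unfolding hat_carrier_def by (auto)
  qed
  show ?thesis unfolding maxchain_def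
  proof (intro conjI ballI allI impI)
    show "Fc xs s \<noteq> []" unfolding Fc_def by simp
    show "set (Fc xs s) \<subseteq> H t" using elH by (auto simp: in_set_conv_nth)
  next
    fix z assume "z \<in> H t" "hle z (hd (Fc xs s))"
    thus "z = hd (Fc xs s)" unfolding Fc_def by (cases z) auto
  next
    fix z assume "z \<in> H t" "hle (last (Fc xs s)) z"
    thus "z = last (Fc xs s)" unfolding Fc_def by (cases z) auto
  next
    fix i assume i: "Suc i < length (Fc xs s)"
    hence "i = 0 \<or> (\<exists>j<n. i = Suc j) \<or> i = Suc n" using len Fc_len[of xs s]
      by (cases i) auto
    moreover
    { assume i0: "i = 0"
      have "cover (H t) hle Bot (Elm (xs ! 0, []))"
        unfolding cover_def
      proof (intro conjI)
        show "Bot \<in> H t" unfolding hat_carrier_def by simp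
        show "Elm (xs ! 0, []) \<in> H t" using inRC[of 0] unfolding hat_carrier_def by simp
        show "\<not> (\<exists>z\<in>H t. hle Bot z \<and> hle z (Elm (xs ! 0, [])) \<and> z \<noteq> Bot \<and> z \<noteq> Elm (xs ! 0, []))"
        proof
          assume "\<exists>z\<in>H t. hle Bot z \<and> hle z (Elm (xs ! 0, [])) \<and> z \<noteq> Bot \<and> z \<noteq> Elm (xs ! 0, [])"
          then obtain zz where zz: "zz \<in> H t" "hle zz (Elm (xs ! 0, []))" "zz \<noteq> Bot" "zz \<noteq> Elm (xs ! 0, [])"
            by blast
          then obtain y l where "zz = Elm (y, l)" "(y, l) \<in> rees_carrier P t n" using H_mid1 by blast
          hence z: "(y, l) \<in> rees_carrier P t n" "rees_le P (y, l) (xs ! 0, [])"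
              "(y, l) \<noteq> (xs ! 0, [])" using zz by auto
          have "y \<in> P" using z(1) unfolding rees_carrier_def by auto
          moreover have "y \<le> xs ! 0" "l = []" using z(2) by auto
          ultimately show False using min0 z(3) by auto
        qed
      qed simp_all
      hence "cover (H t) hle (Fc xs s ! i) (Fc xs s ! Suc i)" using i0 Fc_0[of xs s] Fc_Suc[of 0 xs s] len by simp }
    moreover
    { fix j assume j: "j < n" "i = Suc j"
      let ?a = "(xs ! j, qs s j)" and ?b = "(xs ! Suc j, qs s (Suc j))"
      have qb: "qs s (Suc j) = qs s j @ opt (s ! j)" using qs_Suc sl j by simp
      have lo: "length (opt (s ! j)) \<le> 1" unfolding opt_def by (auto split: option.splits)
      have cv: "cover P (\<le>) (xs ! j) (xs ! Suc j)" using covP j by simp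
      have rj: "r (xs ! j) = j" "r (xs ! Suc j) = Suc j" using rk j by auto
      have ab: "rees_le P ?a ?b" using cv rj qb lo unfolding cover_def by auto
      have ne: "xs ! j \<noteq> xs ! Suc j" using cv unfolding cover_def by auto
      have "cover (H t) hle (Elm ?a) (Elm ?b)"
        unfolding cover_def
      proof (intro conjI)
        show "Elm ?a \<in> H t" "Elm ?b \<in> H t" using inRC j unfolding hat_carrier_def by auto
        show "hle (Elm ?a) (Elm ?b)" using ab by simp
        show "Elm ?a \<noteq> Elm ?b" using ne by simp
        show "\<not> (\<exists>z\<in>H t. hle (Elm ?a) z \<and> hle z (Elm ?b) \<and> z \<noteq> Elm ?a \<and> z \<noteq> Elm ?b)"
        proof
          assume "\<exists>z\<in>H t. hle (Elm ?a) z \<and> hle z (Elm ?b) \<and> z \<noteq> Elm ?a \<and> z \<noteq> Elm ?b"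
          then obtain zz where zz: "zz \<in> H t" "hle (Elm ?a) zz" "hle zz (Elm ?b)" "zz \<noteq> Elm ?a" "zz \<noteq> Elm ?b"
            by blast
          have "zz \<noteq> Bot" using zz by auto
          then obtain y l where "zz = Elm (y, l)" "(y, l) \<in> rees_carrier P t n" using H_mid1 zz by blast
          hence z: "(y, l) \<in> rees_carrier P t n" "rees_le P ?a (y, l)" "rees_le P (y, l) ?b"
              "(y, l) \<noteq> ?a" "(y, l) \<noteq> ?b" using zz by auto
          have yP: "y \<in> P" using z(1) unfolding rees_carrier_def by auto
          have y1: "xs ! j \<le> y" "y \<le> xs ! Suc j" using z(2,3) by auto
          have "y = xs ! j \<or> y = xs ! Suc j" using cv yP y1 unfolding cover_def by auto
          thus False
          proof
            assume "y = xs ! j"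
            hence "prefix (qs s j) l" "length l \<le> length (qs s j)" using z(2) by auto
            hence "l = qs s j" using prefix_len_eq by blast
            thus False using z(4) \<open>y = xs ! j\<close> by simp
          next
            assume "y = xs ! Suc j"
            hence "prefix l (qs s (Suc j))" "length (qs s (Suc j)) \<le> length l" using z(3) by auto
            hence "l = qs s (Suc j)" using prefix_len_eq by blast
            thus False using z(5) \<open>y = xs ! Suc j\<close> by simp
          qed
        qed
      qed
      hence "cover (H t) hle (Fc xs s ! i) (Fc xs s ! Suc i)" using j Fc_Suc[of j xs s] Fc_Suc[of "Suc j" xs s] len by simp }
    moreover
    { assume iN: "i = Suc n"
      let ?a = "(xs ! n, qs s n)"
      have "cover (H t) hle (Elm ?a) Top"
        unfolding cover_def
      proof (intro conjI)
        show "Elm ?a \<in> H t" using inRC unfolding hat_carrier_def by auto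
        show "Top \<in> H t" unfolding hat_carrier_def by auto
        show "\<not> (\<exists>z\<in>H t. hle (Elm ?a) z \<and> hle z Top \<and> z \<noteq> Elm ?a \<and> z \<noteq> Top)"
        proof
          assume "\<exists>z\<in>H t. hle (Elm ?a) z \<and> hle z Top \<and> z \<noteq> Elm ?a \<and> z \<noteq> Top"
          then obtain zz where zz: "zz \<in> H t" "hle (Elm ?a) zz" "zz \<noteq> Elm ?a" "zz \<noteq> Top"
            by blast
          then obtain y l where "zz = Elm (y, l)" "(y, l) \<in> rees_carrier P t n" using H_mid2 by blast
          hence z: "(y, l) \<in> rees_carrier P t n" "rees_le P ?a (y, l)" "(y, l) \<noteq> ?a" using zz by auto
          have yP: "y \<in> P" using z(1) unfolding rees_carrier_def by auto
          have "m \<le> y" using z(2) xn by auto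
          hence ym: "y = m" using mmax yP by (auto intro: order.antisym)
          hence "prefix (qs s n) l" "length l \<le> length (qs s n)" using z(2) xn by auto
          hence "l = qs s n" using prefix_len_eq by blast
          thus False using z(3) ym xn by simp
        qed
      qed simp_all
      hence "cover (H t) hle (Fc xs s ! i) (Fc xs s ! Suc i)" using iN Fc_Suc[of n xs s] Fc_last[of xs s] len by simp }
    ultimately show "cover (H t) hle (Fc xs s ! i) (Fc xs s ! Suc i)" by blast
  qed
qed


lemma hle_Bot: "hle z Bot \<Longrightarrow> z = Bot" by (cases z) auto
lemma hle_Top: "hle Top z \<Longrightarrow> z = Top" by (cases z) auto

lemma chain_decomp:
  assumes mc: "maxchain (H t) hle c" and lc: "length c = n + 3"
  shows "\<exists>xs s. good P n xs \<and> s \<in> SL t n \<and> c = Fc xs s"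
proof -
  have cov: "\<And>i. Suc i < length c \<Longrightarrow> cover (H t) hle (c ! i) (c ! Suc i)"
    using mc unfolding maxchain_def by blast
  have cH: "\<And>i. i < length c \<Longrightarrow> c ! i \<in> H t" using mc unfolding maxchain_def
    by (auto simp: subset_iff)
  have cne: "c \<noteq> []" using lc by auto
  have c0: "c ! 0 = Bot"
  proof -
    have "Bot \<in> H t" unfolding hat_carrier_def by simp
    moreover have "hle Bot (hd c)" by simp
    ultimately have "Bot = hd c" using mc unfolding maxchain_def by blast
    thus ?thesis using cne by (simp add: hd_conv_nth)
  qed
  have cN: "c ! Suc (Suc n) = Top"
  proof -
    have "Top \<in> H t" unfolding hat_carrier_def by simp
    moreover have "hle (last c) Top" by (cases "last c") auto
    ultimately have "Top = last c" using mc unfolding maxchain_def by blast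
    thus ?thesis using cne lc by (simp add: last_conv_nth)
  qed
  have mid: "\<And>j. j \<le> n \<Longrightarrow> \<exists>p. c ! Suc j = Elm p \<and> p \<in> rees_carrier P t n"
  proof -
    fix j assume j: "j \<le> n"
    have c1: "cover (H t) hle (c ! j) (c ! Suc j)" using cov[of j] j lc by simp
    have c2: "cover (H t) hle (c ! Suc j) (c ! Suc (Suc j))" using cov[of "Suc j"] j lc by simp
    have "c ! Suc j \<noteq> Bot" using c1 unfolding cover_def by (auto dest: hle_Bot)
    moreover have "c ! Suc j \<noteq> Top"
    proof
      assume "c ! Suc j = Top"
      hence "hle Top (c ! Suc (Suc j))" "Top \<noteq> c ! Suc (Suc j)" using c2 unfolding cover_def by auto
      thus False using hle_Top by metis
    qed
    moreover have "c ! Suc j \<in> H t" using cH j lc by simp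
    ultimately show "\<exists>p. c ! Suc j = Elm p \<and> p \<in> rees_carrier P t n"
      unfolding hat_carrier_def by auto
  qed
  define e where "e j = (SOME p. c ! Suc j = Elm p \<and> p \<in> rees_carrier P t n)" for j
  have e: "\<And>j. j \<le> n \<Longrightarrow> c ! Suc j = Elm (e j) \<and> e j \<in> rees_carrier P t n"
    unfolding e_def using mid by (rule someI_ex) 
  have eRC: "\<And>j. j \<le> n \<Longrightarrow> fst (e j) \<in> P \<and> set (snd (e j)) \<subseteq> {1..t} \<and> length (snd (e j)) \<le> r (fst (e j))"
  proof -
    fix j assume "j \<le> n"
    hence "e j \<in> rees_carrier P t n" using e by blast
    thus "fst (e j) \<in> P \<and> set (snd (e j)) \<subseteq> {1..t} \<and> length (snd (e j)) \<le> r (fst (e j))"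
      by (cases "e j") (auto simp: rees_carrier_def T_carrier_def)
  qed
  have eP: "\<And>j. j \<le> n \<Longrightarrow> fst (e j) \<in> P" using eRC by blast
  have eT: "\<And>j. j \<le> n \<Longrightarrow> set (snd (e j)) \<subseteq> {1..t} \<and> length (snd (e j)) \<le> r (fst (e j))"
    using eRC by blast
  have ecov: "\<And>j. j < n \<Longrightarrow> rees_le P (e j) (e (Suc j)) \<and> e j \<noteq> e (Suc j)"
  proof -
    fix j assume j: "j < n"
    have "cover (H t) hle (c ! Suc j) (c ! Suc (Suc j))" using cov[of "Suc j"] j lc by simp
    thus "rees_le P (e j) (e (Suc j)) \<and> e j \<noteq> e (Suc j)" using e[of j] e[of "Suc j"] j
      unfolding cover_def by auto
  qed
  have elt: "\<And>j. j < n \<Longrightarrow> fst (e j) < fst (e (Suc j))"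
  proof -
    fix j assume j: "j < n"
    obtain x q y l where xq: "e j = (x, q)" "e (Suc j) = (y, l)" by (cases "e j", cases "e (Suc j)") auto
    have le: "rees_le P (x, q) (y, l)" "(x, q) \<noteq> (y, l)" using ecov[OF j] xq by auto
    have "x \<noteq> y"
    proof
      assume "x = y"
      hence "prefix q l" "length l \<le> length q" using le(1) by auto
      hence "q = l" using prefix_len_eq by blast
      thus False using le(2) \<open>x = y\<close> by simp
    qed
    thus "fst (e j) < fst (e (Suc j))" using le(1) xq by (auto simp: order.order_iff_strict)
  qed
  define f where "f j = r (fst (e j))" for j
  have "\<forall>i\<le>n. f i = i"
  proof (rule strict_incr_id)
    show "\<forall>i<n. f i < f (Suc i)" unfolding f_def using elt eP r_strict by auto
    show "\<forall>i\<le>n. f i \<le> n" unfolding f_def using eP r_le by auto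
  qed
  hence rk: "\<And>j. j \<le> n \<Longrightarrow> r (fst (e j)) = j" unfolding f_def by auto
  define xs where "xs = map (\<lambda>j. fst (e j)) [0..<Suc n]"
  have xsn: "\<And>j. j \<le> n \<Longrightarrow> xs ! j = fst (e j)" unfolding xs_def by (simp del: upt_Suc add: nth_map_upt)
  have lxs: "length xs = Suc n" unfolding xs_def by simp
  have g: "good P n xs" unfolding good_def
  proof (intro conjI)
    show "length xs = Suc n" by (rule lxs)
    show "set xs \<subseteq> P" unfolding xs_def using eP by auto
    show "\<forall>z\<in>P. z \<le> xs ! 0 \<longrightarrow> z = xs ! 0"
    proof (intro ballI impI)
      fix z assume z: "z \<in> P" "z \<le> xs ! 0"
      show "z = xs ! 0"
      proof (rule ccontr)
        assume "z \<noteq> xs ! 0"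
        hence "z < fst (e 0)" using z xsn[of 0] by auto
        hence "r z < r (fst (e 0))" using r_strict z eP[of 0] by blast
        thus False using rk[of 0] by simp
      qed
    qed
    show "\<forall>i<n. cover P (\<le>) (xs ! i) (xs ! Suc i)"
      using cover_of_rank eP elt rk xsn by auto
  qed
  define s where "s = map (\<lambda>j. if snd (e (Suc j)) = snd (e j) then None else Some (last (snd (e (Suc j))))) [0..<n]"
  have ls: "length s = n" unfolding s_def by simp
  have step: "\<And>j. j < n \<Longrightarrow> snd (e (Suc j)) = snd (e j) @ opt (s ! j) \<and> s ! j \<in> Opt t"
  proof -
    fix j assume j: "j < n"
    obtain x q y l where xq: "e j = (x, q)" "e (Suc j) = (y, l)" by (cases "e j", cases "e (Suc j)") auto
    have le: "rees_le P (x, q) (y, l)" using ecov[OF j] xq by auto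
    have "r x = j" "r y = Suc j" using rk[of j] rk[of "Suc j"] xq j by auto
    hence "prefix q l" "length l \<le> Suc (length q)" using le by auto
    hence ql: "l = q \<or> (\<exists>a. l = q @ [a])" using prefix_len1 by blast
    have lt: "set l \<subseteq> {1..t}" using eT[of "Suc j"] xq j by auto
    have sj: "s ! j = (if l = q then None else Some (last l))" unfolding s_def using j xq by simp
    show "snd (e (Suc j)) = snd (e j) @ opt (s ! j) \<and> s ! j \<in> Opt t"
      using ql lt xq unfolding sj opt_def Opt_def by auto
  qed
  have qsj: "\<And>j. j \<le> n \<Longrightarrow> qs s j = snd (e j)"
  proof -
    fix j assume "j \<le> n" thus "qs s j = snd (e j)"
    proof (induction j)
      case 0
      have "length (snd (e 0)) \<le> 0" using eT[of 0] rk[of 0] by simp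
      thus ?case by simp
    next
      case (Suc j)
      thus ?case using qs_Suc[of j s] ls step[of j] by simp
    qed
  qed
  have sSL: "s \<in> SL t n" unfolding SL_def using ls step by auto
  have "c = Fc xs s"
  proof (rule nth_equalityI)
    show "length c = length (Fc xs s)" using lc lxs Fc_len[of xs s] by simp
    fix i assume i: "i < length c"
    hence "i = 0 \<or> (\<exists>j\<le>n. i = Suc j) \<or> i = Suc (Suc n)" using lc by (cases i) auto
    thus "c ! i = Fc xs s ! i"
    proof (elim disjE exE conjE)
      assume "i = 0" thus ?thesis using c0 Fc_0[of xs s] by simp
    next
      fix j assume j: "j \<le> n" "i = Suc j"
      have "Fc xs s ! Suc j = Elm (xs ! j, qs s j)" using Fc_Suc[of j xs s] lxs j by simp
      thus ?thesis using j e[of j] xsn[of j] qsj[of j] by simp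
    next
      assume "i = Suc (Suc n)" thus ?thesis using cN Fc_last[of xs s] lxs by simp
    qed
  qed
  thus ?thesis using g sSL by blast
qed

end


lemma labels_nth: "i < length c - 1 \<Longrightarrow> labels lam c ! i = lam (c ! i) (c ! Suc i)"
  unfolding labels_def by (simp del: upt_Suc)
lemma labels_len: "length (labels lam c) = length c - 1"
  unfolding labels_def by simp

locale RS2 = RS P n m for P :: "'a::order set" and n m +
  fixes lamP :: "'a hat \<Rightarrow> 'a hat \<Rightarrow> 'l::order" and t :: nat
  assumes EL: "EL_labeling (hat_carrier P) (hat_le (\<le>)) lamP" and n1: "n \<ge> 1"
begin

lemma top_ge:
  assumes g: "good P n xs"
  shows "lamP (Elm (xs ! (n - 1))) (Elm m) \<le> lamP (Elm m) Top"
proof -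
  define a where "a = xs ! (n - 1)"
  have cv: "cover P (\<le>) a m" using g good_last[OF g] n1 unfolding good_def a_def
    by (metis Suc_diff_1 diff_less less_numeral_extra(1) order_less_le_trans)
  have aP: "a \<in> P" and am: "a \<le> m" "a \<noteq> m" using cv unfolding cover_def by auto
  let ?X = "hat_carrier P" and ?le = "hat_le ((\<le>) :: 'a \<Rightarrow> 'a \<Rightarrow> bool)"
  let ?I = "interval ?X ?le (Elm a) Top"
  have "Elm a \<in> ?X" "Top \<in> ?X" using aP unfolding hat_carrier_def by auto
  moreover have "?le (Elm a) Top" by simp
  ultimately obtain c where c: "maxchain ?I ?le c" "weakly_increasing (labels lamP c)"
    using EL unfolding EL_labeling_def by blast
  have Ieq: "?I = {Elm a, Elm m, Top}"
  proof (intro set_eqI iffI)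
    fix z assume "z \<in> ?I"
    hence z: "z \<in> ?X" "?le (Elm a) z" unfolding interval_def by auto
    show "z \<in> {Elm a, Elm m, Top}"
    proof (cases z)
      case (Elm y)
      hence "y \<in> P" "a \<le> y" using z unfolding hat_carrier_def by auto
      hence "y = a \<or> y = m" using cv mmax unfolding cover_def by auto
      thus ?thesis using Elm by auto
    qed (use z in auto)
  next
    fix z assume "z \<in> {Elm a, Elm m, Top}"
    thus "z \<in> ?I" using aP mP am unfolding interval_def hat_carrier_def by auto
  qed
  have cov: "\<And>i. Suc i < length c \<Longrightarrow> cover ?I ?le (c ! i) (c ! Suc i)"
    using c(1) unfolding maxchain_def by blast
  have cne: "c \<noteq> []" using c(1) unfolding maxchain_def by auto
  have c0: "c ! 0 = Elm a"
  proof -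
    have "Elm a \<in> ?I" using Ieq by simp
    moreover have "hd c \<in> ?I" using c(1) cne unfolding maxchain_def by auto
    hence "?le (Elm a) (hd c)" unfolding interval_def by auto
    ultimately have "Elm a = hd c" using c(1) unfolding maxchain_def by blast
    thus ?thesis using cne by (simp add: hd_conv_nth)
  qed
  have cl: "last c = Top"
  proof -
    have "Top \<in> ?I" using Ieq by simp
    moreover have "?le (last c) Top" by (cases "last c") auto
    ultimately have "Top = last c" using c(1) unfolding maxchain_def by blast
    thus ?thesis by simp
  qed
  have l2: "2 \<le> length c"
  proof (rule ccontr)
    assume "\<not> 2 \<le> length c"
    moreover have "length c \<noteq> 0" using cne by simp
    ultimately have "length c = 1" by linarith
    thus False using c0 cl cne by (simp add: last_conv_nth)
  qed
  have c1: "c ! 1 = Elm m"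
  proof -
    have cv1: "cover ?I ?le (Elm a) (c ! 1)" using cov[of 0] l2 c0 by simp
    hence "c ! 1 \<in> ?I" "Elm a \<noteq> c ! 1" unfolding cover_def by blast+
    hence "c ! 1 \<in> {Elm a, Elm m, Top}" "c ! 1 \<noteq> Elm a" using Ieq by simp_all
    moreover have "c ! 1 \<noteq> Top"
    proof
      assume "c ! 1 = Top"
      hence nb: "\<not> (\<exists>z\<in>?I. ?le (Elm a) z \<and> ?le z Top \<and> z \<noteq> Elm a \<and> z \<noteq> Top)"
        using cv1 unfolding cover_def by simp
      have "Elm m \<in> ?I" using Ieq by simp
      moreover have "?le (Elm a) (Elm m)" "?le (Elm m) Top" "Elm m \<noteq> Elm a" "Elm m \<noteq> Top" using am by auto
      ultimately show False using nb by blast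
    qed
    ultimately show ?thesis by auto
  qed
  have l3: "3 \<le> length c"
  proof (rule ccontr)
    assume "\<not> 3 \<le> length c"
    hence "length c = 2" using l2 by simp
    thus False using c1 cl cne by (simp add: last_conv_nth)
  qed
  have c2: "c ! 2 = Top"
  proof -
    have cv2: "cover ?I ?le (Elm m) (c ! 2)" using cov[of 1] l3 c1 by (simp add: numeral_2_eq_2)
    hence "c ! 2 \<in> ?I" "Elm m \<noteq> c ! 2" "?le (Elm m) (c ! 2)" unfolding cover_def by blast+
    hence "c ! 2 \<in> {Elm a, Elm m, Top}" "c ! 2 \<noteq> Elm m" "?le (Elm m) (c ! 2)" using Ieq by simp_all
    thus ?thesis using am by (auto dest: order.antisym)
  qed
  have "length c = 3"
  proof (rule ccontr)
    assume "length c \<noteq> 3"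
    hence "Suc 2 < length c" using l3 by simp
    hence "cover ?I ?le (c ! 2) (c ! 3)" using cov[of 2] by (simp add: numeral_3_eq_3)
    thus False using c2 unfolding cover_def by (auto elim: hat_le.elims)
  qed
  hence "labels lamP c = [lamP (Elm a) (Elm m), lamP (Elm m) Top]"
    using c0 c1 c2 unfolding labels_def by (simp add: numeral_3_eq_3 numeral_2_eq_2 upt_rec)
  thus ?thesis using c(2) unfolding weakly_increasing_def a_def by force
qed


lemma strict_prefix_opt: "strict_prefix a (a @ opt z) \<longleftrightarrow> z \<noteq> None"
  unfolding opt_def by (cases z) (auto simp: strict_prefix_def)

lemma AF_iff:
  assumes g: "good P n xs" and s: "s \<in> SL t n"
  shows "ascent_free (labels (induced_lab lamP) (Fc xs s)) \<longleftrightarrow>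
     \<not> labels lamP (Bot # map Elm xs) ! 0 \<le> labels lamP (Bot # map Elm xs) ! 1
     \<and> s \<in> V t n (labels lamP (Bot # map Elm xs))"
proof -
  define L where "L = labels (induced_lab lamP) (Fc xs s)"
  define pc where "pc = Bot # map Elm xs"
  define w where "w = labels lamP pc"
  define b where "b j = (j \<noteq> 0 \<and> s ! (j - 1) \<noteq> None)" for j
  define tp where "tp = lamP (Elm m) Top"
  have lxs: "length xs = Suc n" using g unfolding good_def by simp
  have ls: "length s = n" "\<forall>k<n. s ! k \<in> Opt t" using s unfolding SL_def by auto
  have xn: "xs ! n = m" using good_last[OF g] .
  have lenL: "length L = n + 2" unfolding L_def labels_def using Fc_len[of xs s] lxs by simp
  have lenw: "length w = Suc n" unfolding w_def pc_def labels_def using lxs by simp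
  have Lnth: "\<And>j. j < n + 2 \<Longrightarrow> L ! j = induced_lab lamP (Fc xs s ! j) (Fc xs s ! Suc j)"
    unfolding L_def using Fc_len[of xs s] lxs by (simp add: labels_nth)
  have wnth: "\<And>j. j \<le> n \<Longrightarrow> w ! j = lamP (pc ! j) (pc ! Suc j)"
    unfolding w_def pc_def using lxs by (subst labels_nth) (auto simp: less_Suc_eq_le)
  have pc0: "pc ! 0 = Bot" unfolding pc_def by simp
  have pcS: "\<And>i. i \<le> n \<Longrightarrow> pc ! Suc i = Elm (xs ! i)" unfolding pc_def using lxs by simp
  have Lj: "\<And>j. j \<le> n \<Longrightarrow> L ! j = (w ! j, b j)"
  proof -
    fix j assume j: "j \<le> n"
    show "L ! j = (w ! j, b j)"
    proof (cases j)
      case 0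
      have "L ! 0 = induced_lab lamP Bot (Elm (xs ! 0, qs s 0))"
        using Lnth[of 0] Fc_0[of xs s] Fc_Suc[of 0 xs s] lxs by simp
      thus ?thesis using 0 wnth[of 0] pc0 pcS[of 0] unfolding b_def by (simp add: strict_prefix_def)
    next
      case (Suc i)
      hence i: "i < n" using j by simp
      have "L ! Suc i = induced_lab lamP (Elm (xs ! i, qs s i)) (Elm (xs ! Suc i, qs s (Suc i)))"
        using Lnth[of "Suc i"] Fc_Suc[of i xs s] Fc_Suc[of "Suc i" xs s] lxs i by simp
      moreover have "qs s (Suc i) = qs s i @ opt (s ! i)" using qs_Suc ls i by simp
      ultimately show ?thesis using Suc wnth[of "Suc i"] pcS[of i] pcS[of "Suc i"] i
        unfolding b_def by (simp add: strict_prefix_opt)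
    qed
  qed
  have Ln: "L ! Suc n = (tp, False)"
  proof -
    have "L ! Suc n = induced_lab lamP (Elm (xs ! n, qs s n)) Top"
      using Lnth[of "Suc n"] Fc_Suc[of n xs s] Fc_last[of xs s] lxs by simp
    thus ?thesis using xn unfolding tp_def by simp
  qed
  have top: "w ! n \<le> tp"
  proof -
    have "w ! n = lamP (Elm (xs ! (n - 1))) (Elm (xs ! n))"
      using wnth[of n] pcS[of n] pcS[of "n - 1"] n1 by simp
    thus ?thesis using top_ge[OF g] xn unfolding tp_def by simp
  qed
  have AF: "ascent_free L \<longleftrightarrow> (\<forall>j\<le>n. \<not> L ! j \<le> L ! Suc j)"
    unfolding ascent_free_def lenL by (auto simp: less_Suc_eq_le)
  show ?thesis unfolding L_def[symmetric] pc_def[symmetric] w_def[symmetric] AF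
  proof
    assume A: "\<forall>j\<le>n. \<not> L ! j \<le> L ! Suc j"
    have a0: "\<not> w ! 0 \<le> w ! 1" using A[rule_format, of 0] Lj[of 0] Lj[of 1] n1 unfolding b_def by auto
    have kf: "(must_some n w k \<longrightarrow> s ! k \<noteq> None) \<and> (must_none w k \<longrightarrow> s ! k = None)" if k: "k < n" for k
    proof (intro conjI)
      show "must_some n w k \<longrightarrow> s ! k \<noteq> None"
      proof
        assume "must_some n w k"
        hence "Suc k = n \<or> (k + 2 \<le> n \<and> w ! (k+1) \<le> w ! (k+2))" unfolding must_some_def .
        thus "s ! k \<noteq> None"
        proof
          assume kn: "Suc k = n"
          have "\<not> L ! n \<le> L ! Suc n" using A by simp
          hence "b n" using Lj[of n] Ln top by auto
          thus ?thesis using kn unfolding b_def by auto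
        next
          assume kk: "k + 2 \<le> n \<and> w ! (k+1) \<le> w ! (k+2)"
          have "\<not> L ! Suc k \<le> L ! Suc (Suc k)" using A kk by simp
          hence "b (Suc k)" using Lj[of "Suc k"] Lj[of "Suc (Suc k)"] kk by (auto simp: numeral_2_eq_2)
          thus ?thesis unfolding b_def by simp
        qed
      qed
      show "must_none w k \<longrightarrow> s ! k = None"
      proof
        assume "must_none w k"
        hence kk: "1 \<le> k" "w ! k \<le> w ! (k+1)" unfolding must_none_def by auto
        have "\<not> L ! k \<le> L ! Suc k" using A k by simp
        hence "\<not> b (Suc k)" using Lj[of k] Lj[of "Suc k"] kk k by auto
        thus "s ! k = None" unfolding b_def by simp
      qed
    qed
    have "s \<in> V t n w" unfolding V_def Aset_def using ls kf by auto
    thus "\<not> w ! 0 \<le> w ! 1 \<and> s \<in> V t n w" using a0 by simp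
  next
    assume B: "\<not> w ! 0 \<le> w ! 1 \<and> s \<in> V t n w"
    have sA: "\<And>k. k < n \<Longrightarrow> (must_some n w k \<longrightarrow> s ! k \<noteq> None) \<and> (must_none w k \<longrightarrow> s ! k = None)"
      using B unfolding V_def Aset_def by auto
    show "\<forall>j\<le>n. \<not> L ! j \<le> L ! Suc j"
    proof (intro allI impI)
      fix j assume j: "j \<le> n"
      show "\<not> L ! j \<le> L ! Suc j"
      proof (cases "j = n")
        case True
        have "must_some n w (n - 1)" unfolding must_some_def using n1 by simp
        hence "s ! (n - 1) \<noteq> None" using sA[of "n - 1"] n1 by simp
        hence "b n" unfolding b_def using n1 by simp
        thus ?thesis using True Lj[of n] Ln by simp
      next
        case False
        hence jn: "j < n" using j by simp
        show ?thesis
        proof (cases "j = 0")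
          case True
          thus ?thesis using B Lj[of 0] Lj[of 1] n1 by simp
        next
          case False
          show ?thesis
          proof
            assume le: "L ! j \<le> L ! Suc j"
            hence wle: "w ! j \<le> w ! Suc j" and ble: "b j \<le> b (Suc j)"
              using Lj[of j] Lj[of "Suc j"] jn by auto
            have "must_none w j" unfolding must_none_def using False wle by simp
            hence "s ! j = None" using sA jn by blast
            moreover have "must_some n w (j - 1)" unfolding must_some_def using False jn wle by simp
            hence "s ! (j - 1) \<noteq> None" using sA[of "j - 1"] jn by simp
            ultimately show False using ble False unfolding b_def by simp
          qed
        qed
      qed
    qed
  qed
qed

end


fun unE :: "'a hat \<Rightarrow> 'a" where "unE (Elm x) = x" | "unE _ = undefined"

lemma opt_inj: "opt a = opt b \<Longrightarrow> a = b"
  unfolding opt_def by (cases a; cases b) auto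

context RS2
begin

abbreviation "wd xs \<equiv> labels lamP (Bot # map Elm xs)"

lemma finite_G: "finite {xs. good P n xs}"
proof (rule finite_subset)
  show "{xs. good P n xs} \<subseteq> {xs. set xs \<subseteq> P \<and> length xs = Suc n}" unfolding good_def by auto
  show "finite {xs. set xs \<subseteq> P \<and> length xs = Suc n}" using fin by (rule finite_lists_length_eq)
qed

lemma V_SL: "V t n w \<subseteq> SL t n" unfolding V_def SL_def Aset_def by auto

lemma finite_V: "finite (V t n w)"
proof (rule finite_subset)
  show "V t n w \<subseteq> {s. set s \<subseteq> Opt t \<and> length s = n}" unfolding V_def Aset_def
    by (auto simp: in_set_conv_nth)
  show "finite {s. set s \<subseteq> Opt t \<and> length s = n}" using finite_Opt by (rule finite_lists_length_eq)
qed

lemma Fc_inj_xs: assumes "length xs = Suc n" "length xs' = Suc n" "Fc xs s = Fc xs' s'" shows "xs = xs'"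
proof (rule nth_equalityI)
  show "length xs = length xs'" using assms by simp
  fix i assume "i < length xs"
  thus "xs ! i = xs' ! i" using Fc_Suc[of i xs s] Fc_Suc[of i xs' s'] assms by simp
qed

lemma Fc_inj_s: assumes "length xs = Suc n" shows "inj_on (Fc xs) (V t n w)"
proof (rule inj_onI)
  fix s s' assume s: "s \<in> V t n w" "s' \<in> V t n w" and e: "Fc xs s = Fc xs s'"
  have ls: "length s = n" "length s' = n" using s unfolding V_def by auto
  have q: "\<And>i. i \<le> n \<Longrightarrow> qs s i = qs s' i"
    using Fc_Suc[of _ xs s] Fc_Suc[of _ xs s'] e assms by (metis hat.inject less_Suc_eq_le prod.inject)
  show "s = s'"
  proof (rule nth_equalityI)
    show "length s = length s'" using ls by simp
    fix k assume k: "k < length s"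
    have "qs s (Suc k) = qs s' (Suc k)" using q k ls by simp
    hence "qs s k @ opt (s ! k) = qs s' k @ opt (s' ! k)" using qs_Suc k ls by simp
    hence "opt (s ! k) = opt (s' ! k)" using q k ls by simp
    thus "s ! k = s' ! k" by (rule opt_inj)
  qed
qed

lemma A_eq:
  "{c. maxchain (H t) hle c \<and> length c - 1 = n + 2 \<and> ascent_free (labels (induced_lab lamP) c)}
   = (\<Union>xs\<in>{xs. good P n xs \<and> \<not> wd xs ! 0 \<le> wd xs ! 1}. Fc xs ` V t n (wd xs))"
proof (intro set_eqI iffI)
  fix c assume "c \<in> {c. maxchain (H t) hle c \<and> length c - 1 = n + 2 \<and> ascent_free (labels (induced_lab lamP) c)}"
  hence c: "maxchain (H t) hle c" "length c = n + 3" "ascent_free (labels (induced_lab lamP) c)" by auto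
  obtain xs s where xs: "good P n xs" "s \<in> SL t n" "c = Fc xs s" using chain_decomp[OF c(1,2)] by blast
  have "\<not> wd xs ! 0 \<le> wd xs ! 1 \<and> s \<in> V t n (wd xs)" using AF_iff[OF xs(1,2)] c(3) xs(3) by simp
  thus "c \<in> (\<Union>xs\<in>{xs. good P n xs \<and> \<not> wd xs ! 0 \<le> wd xs ! 1}. Fc xs ` V t n (wd xs))"
    using xs by blast
next
  fix c assume "c \<in> (\<Union>xs\<in>{xs. good P n xs \<and> \<not> wd xs ! 0 \<le> wd xs ! 1}. Fc xs ` V t n (wd xs))"
  then obtain xs s where xs: "good P n xs" "\<not> wd xs ! 0 \<le> wd xs ! 1" "s \<in> V t n (wd xs)" "c = Fc xs s"
    by blast
  have sS: "s \<in> SL t n" using V_SL xs(3) by blast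
  have "maxchain (H t) hle c" using maxchain_Fc[OF xs(1) sS] xs(4) by simp
  moreover have "length c = n + 3" using xs(1,4) Fc_len[of xs s] unfolding good_def by simp
  moreover have "ascent_free (labels (induced_lab lamP) c)" using AF_iff[OF xs(1) sS] xs by simp
  ultimately show "c \<in> {c. maxchain (H t) hle c \<and> length c - 1 = n + 2 \<and> ascent_free (labels (induced_lab lamP) c)}"
    by simp
qed

lemma maxchain_Q_shape:
  assumes mc: "maxchain (Qc P) (hat_le (\<le>)) c" shows "c = Bot # map Elm (map unE (tl c))"
proof -
  have cne: "c \<noteq> []" using mc unfolding maxchain_def by auto
  have "Bot = hd c" using mc unfolding maxchain_def by auto
  hence c0: "c = Bot # tl c" using cne by (cases c) auto
  have cov: "\<And>i. Suc i < length c \<Longrightarrow> cover (Qc P) (hat_le (\<le>)) (c ! i) (c ! Suc i)"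
    using mc unfolding maxchain_def by blast
  have "\<forall>z\<in>set (tl c). z = Elm (unE z)"
  proof
    fix z assume "z \<in> set (tl c)"
    then obtain i where i: "i < length (tl c)" "z = tl c ! i" by (auto simp: in_set_conv_nth)
    have zc: "z = c ! Suc i" using i cne by (simp add: nth_tl)
    have "cover (Qc P) (hat_le (\<le>)) (c ! i) z" using cov[of i] i zc by simp
    hence "z \<in> Qc P" "z \<noteq> Bot" unfolding cover_def by (auto elim: hat_le.elims)
    thus "z = Elm (unE z)" by auto
  qed
  hence "map Elm (map unE (tl c)) = tl c" by (induction "tl c") (auto simp: map_idI)
  thus ?thesis using c0 by (metis map_idI map_map comp_apply \<open>\<forall>z\<in>set (tl c). z = Elm (unE z)\<close>)
qed

lemma cc_eq: "chain_count P lamP w = card {xs. good P n xs \<and> wd xs = w}"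
proof -
  have "{c. maxchain (Qc P) (hat_le (\<le>)) c \<and> labels lamP c = w}
      = (\<lambda>xs. Bot # map Elm xs) ` {xs. good P n xs \<and> wd xs = w}"
  proof (intro set_eqI iffI)
    fix c assume "c \<in> {c. maxchain (Qc P) (hat_le (\<le>)) c \<and> labels lamP c = w}"
    hence c: "maxchain (Qc P) (hat_le (\<le>)) c" "labels lamP c = w" by auto
    have e: "c = Bot # map Elm (map unE (tl c))" by (rule maxchain_Q_shape[OF c(1)])
    have "good P n (map unE (tl c))" using XS_good c(1) e by metis
    moreover have "wd (map unE (tl c)) = w" using c(2) e by metis
    ultimately have "map unE (tl c) \<in> {xs. good P n xs \<and> wd xs = w}" by simp
    thus "c \<in> (\<lambda>xs. Bot # map Elm xs) ` {xs. good P n xs \<and> wd xs = w}"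
      by (rule image_eqI[where f="\<lambda>xs. Bot # map Elm xs" and x="map unE (tl c)", OF e])
  next
    fix c assume "c \<in> (\<lambda>xs. Bot # map Elm xs) ` {xs. good P n xs \<and> wd xs = w}"
    thus "c \<in> {c. maxchain (Qc P) (hat_le (\<le>)) c \<and> labels lamP c = w}" using XS_good by auto
  qed
  moreover have "inj_on (\<lambda>xs. Bot # map Elm xs) {xs. good P n xs \<and> wd xs = w}"
    by (auto simp: inj_on_def)
  ultimately show ?thesis unfolding chain_count_def by (simp add: card_image)
qed

end


context RS2
begin

lemma wd_len: "good P n xs \<Longrightarrow> length (wd xs) = Suc n"
  unfolding good_def by (simp add: labels_len)

lemma main_nat:
  "card {c. maxchain (H t) hle c \<and> length c - 1 = n + 2 \<and> ascent_free (labels (induced_lab lamP) c)}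
   = (\<Sum>w \<in> {w \<in> NDA (n + 1). \<not> w ! 0 \<le> w ! 1 \<and> \<not> w ! (n - 1) \<le> w ! n \<and> chain_count P lamP w \<noteq> 0}.
        chain_count P lamP w * (t ^ (asc w + 1) * Suc t ^ (n - 1 - 2 * asc w)))"
  (is "card ?A = (\<Sum>w\<in>?S. ?F w)")
proof -
  define G where "G = {xs. good P n xs}"
  define cond where "cond w \<longleftrightarrow> \<not> w ! 0 \<le> w ! 1 \<and> no_double_ascent w \<and> \<not> w ! (n - 1) \<le> w ! n" for w :: "'l list"
  define f where "f w = t ^ (asc w + 1) * Suc t ^ (n - 1 - 2 * asc w)" for w :: "'l list"
  define g where "g w = (if cond w then f w else 0)" for w
  have finG: "finite G" unfolding G_def by (rule finite_G)
  have "card ?A = card (\<Union>xs\<in>{xs. good P n xs \<and> \<not> wd xs ! 0 \<le> wd xs ! 1}. Fc xs ` V t n (wd xs))"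
    by (simp only: A_eq)
  also have "\<dots> = (\<Sum>xs\<in>{xs. good P n xs \<and> \<not> wd xs ! 0 \<le> wd xs ! 1}. card (Fc xs ` V t n (wd xs)))"
  proof (rule card_UN_disjoint)
    show "finite {xs. good P n xs \<and> \<not> wd xs ! 0 \<le> wd xs ! 1}"
      using finG unfolding G_def by (rule finite_subset[rotated]) auto
    show "\<forall>i\<in>{xs. good P n xs \<and> \<not> wd xs ! 0 \<le> wd xs ! 1}. finite (Fc i ` V t n (wd i))"
      using finite_V by auto
    show "\<forall>i\<in>{xs. good P n xs \<and> \<not> wd xs ! 0 \<le> wd xs ! 1}. \<forall>j\<in>{xs. good P n xs \<and> \<not> wd xs ! 0 \<le> wd xs ! 1}.
        i \<noteq> j \<longrightarrow> Fc i ` V t n (wd i) \<inter> Fc j ` V t n (wd j) = {}"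
      using Fc_inj_xs unfolding good_def by blast
  qed
  also have "\<dots> = (\<Sum>xs\<in>{xs. good P n xs \<and> \<not> wd xs ! 0 \<le> wd xs ! 1}. card (V t n (wd xs)))"
    by (rule sum.cong) (auto simp: good_def intro!: card_image Fc_inj_s)
  also have "\<dots> = (\<Sum>xs\<in>G. if \<not> wd xs ! 0 \<le> wd xs ! 1 then card (V t n (wd xs)) else 0)"
    unfolding G_def using sum.inter_filter[OF finG[unfolded G_def]] by simp
  also have "\<dots> = (\<Sum>xs\<in>G. g (wd xs))"
  proof (rule sum.cong)
    fix xs assume "xs \<in> G"
    hence len: "length (wd xs) = Suc n" using wd_len unfolding G_def by simp
    show "(if \<not> wd xs ! 0 \<le> wd xs ! 1 then card (V t n (wd xs)) else 0) = g (wd xs)"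
      using card_V[OF len n1] unfolding g_def cond_def f_def by auto
  qed simp
  also have "\<dots> = (\<Sum>w\<in>wd ` G. \<Sum>xs\<in>{xs. xs \<in> G \<and> wd xs = w}. g (wd xs))"
    by (rule sum.image_gen[OF finG])
  also have "\<dots> = (\<Sum>w\<in>wd ` G. chain_count P lamP w * g w)"
  proof (rule sum.cong)
    fix w assume "w \<in> wd ` G"
    have "(\<Sum>xs\<in>{xs. xs \<in> G \<and> wd xs = w}. g (wd xs)) = (\<Sum>xs\<in>{xs. xs \<in> G \<and> wd xs = w}. g w)"
      by (rule sum.cong) auto
    also have "\<dots> = card {xs. xs \<in> G \<and> wd xs = w} * g w" by simp
    also have "card {xs. xs \<in> G \<and> wd xs = w} = chain_count P lamP w" unfolding cc_eq G_def by simp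
    finally show "(\<Sum>xs\<in>{xs. xs \<in> G \<and> wd xs = w}. g (wd xs)) = chain_count P lamP w * g w" .
  qed simp
  also have "\<dots> = (\<Sum>w\<in>{w \<in> wd ` G. cond w}. chain_count P lamP w * f w)"
    using sum.inter_filter[of "wd ` G" "\<lambda>w. chain_count P lamP w * f w" cond] finG
    unfolding g_def by (auto intro!: sum.cong)
  also have "{w \<in> wd ` G. cond w} = ?S"
  proof (intro set_eqI iffI)
    fix w assume "w \<in> {w \<in> wd ` G. cond w}"
    then obtain xs where xs: "xs \<in> G" "w = wd xs" "cond w" by auto
    have len: "length w = n + 1" using wd_len xs unfolding G_def by simp
    have "{xs. good P n xs \<and> wd xs = w} \<noteq> {}" using xs unfolding G_def by auto
    moreover have "finite {xs. good P n xs \<and> wd xs = w}"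
      using finG unfolding G_def by (rule finite_subset[rotated]) auto
    ultimately have "chain_count P lamP w \<noteq> 0" unfolding cc_eq by simp
    thus "w \<in> ?S" using xs(3) len unfolding cond_def NDA_def by simp
  next
    fix w assume w: "w \<in> ?S"
    hence "chain_count P lamP w \<noteq> 0" by simp
    hence "{xs. good P n xs \<and> wd xs = w} \<noteq> {}" unfolding cc_eq by (metis card.empty)
    hence "w \<in> wd ` G" unfolding G_def by auto
    thus "w \<in> {w \<in> wd ` G. cond w}" using w unfolding cond_def NDA_def by simp
  qed
  finally show ?thesis unfolding f_def .
qed

end

theorem theorem3p3:
  fixes P :: "'a::order set" and n t :: nat and lamP :: "'a hat \<Rightarrow> 'a hat \<Rightarrow> 'l::order"
  assumes "finite P"
    and "semipure P (\<le>)"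
    and "poset_length P (\<le>) = n"
    and "\<exists>m\<in>P. \<forall>x\<in>P. x \<le> m"
    and "t \<ge> 1"
    and "EL_labeling (hat_carrier P) (hat_le (\<le>)) lamP"
    and "n \<ge> 1"
  shows "real (card {c. maxchain (hat_carrier (rees_carrier P t n)) (hat_le (rees_le P)) c
                       \<and> length c - 1 = n + 2
                       \<and> ascent_free (labels (induced_lab lamP) c)})
       = (\<Sum>w \<in> {w \<in> NDA (n + 1). \<not> w ! 0 \<le> w ! 1 \<and> \<not> w ! (n - 1) \<le> w ! n
                               \<and> chain_count P lamP w \<noteq> 0}.
            real (chain_count P lamP w) * real t ^ (asc w + 1)
              * (1 + real t) powi (int n - 1 - 2 * int (asc w)))"
proof -
  obtain m where m: "m \<in> P" "\<forall>x\<in>P. x \<le> m" using assms(4) by blast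
  interpret RS2 P n m lamP t
    by unfold_locales (use assms m in auto)
  have main: "card {c. maxchain (hat_carrier (rees_carrier P t n)) (hat_le (rees_le P)) c
                       \<and> length c - 1 = n + 2
                       \<and> ascent_free (labels (induced_lab lamP) c)}
   = (\<Sum>w \<in> {w \<in> NDA (n + 1). \<not> w ! 0 \<le> w ! 1 \<and> \<not> w ! (n - 1) \<le> w ! n \<and> chain_count P lamP w \<noteq> 0}.
        chain_count P lamP w * (t ^ (asc w + 1) * Suc t ^ (n - 1 - 2 * asc w)))"
    by (rule main_nat)
  show ?thesis unfolding main of_nat_sum
  proof (rule sum.cong)
    fix w assume w: "w \<in> {w \<in> NDA (n + 1). \<not> w ! 0 \<le> w ! 1 \<and> \<not> w ! (n - 1) \<le> w ! n \<and> chain_count P lamP w \<noteq> 0}"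
    hence len: "length w = Suc n" and c: "no_double_ascent w \<and> \<not> w ! (n-1) \<le> w ! n"
      and w01: "\<not> w ! 0 \<le> w ! 1" unfolding NDA_def by auto
    have b: "Suc (2 * asc w) \<le> n" using asc_bound[OF len n1 w01 c] .
    hence e: "int n - 1 - 2 * int (asc w) = int (n - 1 - 2 * asc w)" by simp
    show "real (chain_count P lamP w * (t ^ (asc w + 1) * Suc t ^ (n - 1 - 2 * asc w))) =
         real (chain_count P lamP w) * real t ^ (asc w + 1) * (1 + real t) powi (int n - 1 - 2 * int (asc w))"
      unfolding e power_int_of_nat by simp
  qed simp
qed

end
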